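(* For every $n$, let $C_n\subseteq\mathcal C(G'')$ be a discrete (multi-)set of pointed perturbed diamonds with parameter $n$ (i.e. elements of the form $(D_n(x''),x'')$). Assume that for every $T<\infty$, $\lim_n |C_n\cap A_{n,T}|=0$. Then every subsequential limit of $(C_n)_n$ in $\mathcal C(G'')$ consists only of perturbed pointed horoballs of type II (possibly with infinite delay).
   Context: $G,G'$ are finitely generated groups with neutral elements $o,o'$, word metrics $d,d'$ from Cayley graphs with respect to finite generating sets, ball volumes $v_n,v'_n$, growth rates $a=\lim v_n^{1/n}>1$, $a'=\lim (v'_n)^{1/n}>1$, and $c:=\log a/\log a'$. $G''=G\times G'$ has origin $o''=(o,o')$ and metric $\rho_c((x,x'),(y,y'))=d(x,y)+d'(x',y')/c$. Fix a non-decreasing $f:\mathbb Z_{\ge0}\to\mathbb Z_{\ge0}$ and a strictly increasing sequence $(r_j)$ in $\mathbb Z_{\ge0}$ with $f(0)=0$, $r'_j:=f(r_j)$, $0<\inf_n v'_{r'_n}/v_{r_n}\le \sup_n v'_{r'_n}/v_{r_n}<\infty$ and $\forall m\,\exists N\,\forall n\ge N:|f(n+m)-f(n)-cm|\le1$. Perturbed diamond: $D_n(x''):=\bigcup_{t=0}^{r_n}\{(y,y'):d(x,y)=r_n-t,\ d'(x',y')\le f(t)\}$ for $x''=(x,x')$. Horocompactification $\overline{G''}$ of $(G'',\rho_c)$: with $\rho_{x''}(y'')=\rho_c(x'',y'')-\rho_c(x'',o'')$, the closure of $\{\rho_{x''}\}$ among $1$-Lipschitz functions vanishing at $o''$ under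 pointwise convergence; similarly $\overline G,\overline{G'}$ and boundaries $\partial G=\overline G\setminus G$, $\partial G'$. For $\theta\in\partial G$, $\theta'\in\partial G'$, $(\theta,\theta')\in\partial G''$ is the function $(y,y')\mapsto d_\theta(y)+d_{\theta'}(y')/c$. $\mathcal C(G'')$ is the space of pairs $(B,\theta)$ with $B\subseteq G''$ nonempty and $\theta\in\overline{G''}$, with the product of the Fell topology (pointwise convergence of indicators) and the topology of $\overline{G''}$; a discrete set in $\mathcal C(G'')$ is a multiset such that each $y''\in G''$ lies in $B$ for only finitely many of its elements $(B,\theta)$, and convergence of discrete sets is vague convergence of the associated counting measures. A pointed perturbed diamond is $(D_n(x''),x'')$. $A_{n,T}$ is the set of pointed perturbed diamonds with parameter $n$ whose center $(x,x')$ satisfies either ($d(o,x)<r_n+T$ and $d'(o',x')<T$) or ($d'(o',x')<r'_n+T$ and $d(o,x)<T$). A perturbed pointed horoball of type II is a pointed set $(B,\theta'')$ which is a limit in $\mathcal C(G'')$ of pointed perturbed diamonds $(D_{n_k}(x''_k),x''_k)$ (along parameters $n_k\to\infty$) with centers $x''_k=(x_k,x'_k)$ satisfying $d(x_k,o)\to\infty$ and $d'(x'_k,o')\to\infty$ (then $\theta''\in\partial G\times\partial G'$); additionally $(G'',\theta'')$ for any $\theta''\in\partial G\times\partial G'$ counts as a perturbed pointed horoball of type II with infinite delay. *)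

theory Defs
  imports "HOL-Analysis.Analysis"
begin

text \<open>Groups are types of class group_add (written additively, not necessarily
commutative); the neutral element o is 0.  S is a finite generating set.\<close>

definition fin_gen :: "'a::group_add set \<Rightarrow> bool" where
  "fin_gen S \<longleftrightarrow> finite S \<and>
     (\<forall>x. \<exists>ws. set ws \<subseteq> S \<union> uminus ` S \<and> sum_list ws = x)"

definition word_len :: "'a::group_add set \<Rightarrow> 'a \<Rightarrow> nat" where
  "word_len S x = (LEAST n. \<exists>ws. length ws = n \<and> set ws \<subseteq> S \<union> uminus ` S \<and> sum_list ws = x)"

definition wdist :: "'a::group_add set \<Rightarrow> 'a \<Rightarrow> 'a \<Rightarrow> nat" where
  "wdist S x y = word_len S (- x + y)"

definition ball_vol :: "'a::group_add set \<Rightarrow> nat \<Rightarrow> nat" where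
  "ball_vol S n = card {y. wdist S 0 y \<le> n}"

definition growth :: "'a::group_add set \<Rightarrow> real" where
  "growth S = lim (\<lambda>n. root n (real (ball_vol S n)))"

definition horoG :: "'a::group_add set \<Rightarrow> 'a \<Rightarrow> ('a \<Rightarrow> real)" where
  "horoG S x = (\<lambda>y. real (wdist S x y) - real (wdist S x 0))"

definition boundaryG :: "'a::group_add set \<Rightarrow> ('a \<Rightarrow> real) set" where
  "boundaryG S = closure (range (horoG S)) - range (horoG S)"

definition rho :: "'a::group_add set \<Rightarrow> 'b::group_add set \<Rightarrow> real \<Rightarrow> 'a \<times> 'b \<Rightarrow> 'a \<times> 'b \<Rightarrow> real" where
  "rho S S' c p q = real (wdist S (fst p) (fst q)) + real (wdist S' (snd p) (snd q)) / c"

definition horo :: "'a::group_add set \<Rightarrow> 'b::group_add set \<Rightarrow> real \<Rightarrow> 'a \<times> 'b \<Rightarrow> ('a \<times> 'b \<Rightarrow> real)" where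
  "horo S S' c x = (\<lambda>y. rho S S' c x y - rho S S' c x 0)"

text \<open>Horocompactification of (G'', rho_c): closure (pointwise convergence) of the
horofunctions; points of G'' are identified with their horofunctions.\<close>
definition horo_closure :: "'a::group_add set \<Rightarrow> 'b::group_add set \<Rightarrow> real \<Rightarrow> ('a \<times> 'b \<Rightarrow> real) set" where
  "horo_closure S S' c = closure (range (horo S S' c))"

definition prod_boundary :: "'a::group_add set \<Rightarrow> 'b::group_add set \<Rightarrow> real \<Rightarrow> ('a \<times> 'b \<Rightarrow> real) set" where
  "prod_boundary S S' c =
     {(\<lambda>(y, y'). \<theta> y + \<theta>' y' / c) | \<theta> \<theta>'. \<theta> \<in> boundaryG S \<and> \<theta>' \<in> boundaryG S'}"

text \<open>A point (B, theta) is represented as (indicator of B as a bool-valued function, theta);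
the product topology on functions into bool gives the Fell topology.\<close>
type_synonym ('a, 'b) cpt = "(('a \<times> 'b) \<Rightarrow> bool) \<times> (('a \<times> 'b) \<Rightarrow> real)"

definition cspace :: "'a::group_add set \<Rightarrow> 'b::group_add set \<Rightarrow> real \<Rightarrow> ('a, 'b) cpt set" where
  "cspace S S' c = {(b, \<theta>). (\<exists>y. b y) \<and> \<theta> \<in> horo_closure S S' c}"

text \<open>A discrete (multi)set: multiplicity function, supported in X, locally finite.\<close>
definition discrete_set :: "('a, 'b) cpt set \<Rightarrow> (('a, 'b) cpt \<Rightarrow> nat) \<Rightarrow> bool" where
  "discrete_set X m \<longleftrightarrow> (\<forall>p. m p \<noteq> 0 \<longrightarrow> p \<in> X) \<and> (\<forall>y. finite {p. m p \<noteq> 0 \<and> fst p y})"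

definition Cc :: "('c::topological_space) set \<Rightarrow> ('c \<Rightarrow> real) set" where
  "Cc X = {\<phi>. continuous_on X \<phi> \<and> (\<exists>K. compact K \<and> K \<subseteq> X \<and> (\<forall>p\<in>X - K. \<phi> p = 0))}"

definition mint :: "('c \<Rightarrow> nat) \<Rightarrow> ('c \<Rightarrow> real) \<Rightarrow> real" where
  "mint m \<phi> = (\<Sum>p | m p \<noteq> 0 \<and> \<phi> p \<noteq> 0. real (m p) * \<phi> p)"

definition vague_conv :: "('c::topological_space) set \<Rightarrow> (nat \<Rightarrow> 'c \<Rightarrow> nat) \<Rightarrow> ('c \<Rightarrow> nat) \<Rightarrow> bool" where
  "vague_conv X ms m \<longleftrightarrow> (\<forall>\<phi>\<in>Cc X. (\<lambda>n. mint (ms n) \<phi>) \<longlonglongrightarrow> mint m \<phi>)"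

definition diamond :: "'a::group_add set \<Rightarrow> 'b::group_add set \<Rightarrow> (nat \<Rightarrow> nat) \<Rightarrow> (nat \<Rightarrow> nat)
    \<Rightarrow> nat \<Rightarrow> 'a \<times> 'b \<Rightarrow> ('a \<times> 'b) set" where
  "diamond S S' f r n x = (\<Union>t\<in>{0..r n}.
     {(y, y'). wdist S (fst x) y = r n - t \<and> wdist S' (snd x) y' \<le> f t})"

definition pdiamond :: "'a::group_add set \<Rightarrow> 'b::group_add set \<Rightarrow> real \<Rightarrow> (nat \<Rightarrow> nat) \<Rightarrow> (nat \<Rightarrow> nat)
    \<Rightarrow> nat \<Rightarrow> 'a \<times> 'b \<Rightarrow> ('a, 'b) cpt" where
  "pdiamond S S' c f r n x = ((\<lambda>y. y \<in> diamond S S' f r n x), horo S S' c x)"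

definition A_set :: "'a::group_add set \<Rightarrow> 'b::group_add set \<Rightarrow> real \<Rightarrow> (nat \<Rightarrow> nat) \<Rightarrow> (nat \<Rightarrow> nat)
    \<Rightarrow> nat \<Rightarrow> real \<Rightarrow> ('a, 'b) cpt set" where
  "A_set S S' c f r n T = pdiamond S S' c f r n `
     {x. (real (wdist S 0 (fst x)) < real (r n) + T \<and> real (wdist S' 0 (snd x)) < T) \<or>
         (real (wdist S' 0 (snd x)) < real (f (r n)) + T \<and> real (wdist S 0 (fst x)) < T)}"

definition typeII_horoball :: "'a::group_add set \<Rightarrow> 'b::group_add set \<Rightarrow> real \<Rightarrow> (nat \<Rightarrow> nat) \<Rightarrow> (nat \<Rightarrow> nat)
    \<Rightarrow> ('a, 'b) cpt \<Rightarrow> bool" where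
  "typeII_horoball S S' c f r p \<longleftrightarrow>
     (p \<in> cspace S S' c \<and>
      (\<exists>nk xk. filterlim nk at_top sequentially \<and>
        filterlim (\<lambda>k. real (wdist S (fst (xk k)) 0)) at_top sequentially \<and>
        filterlim (\<lambda>k. real (wdist S' (snd (xk k)) 0)) at_top sequentially \<and>
        (\<lambda>k. pdiamond S S' c f r (nk k) (xk k)) \<longlonglongrightarrow> p))
   \<or> (fst p = (\<lambda>_. True) \<and> snd p \<in> prod_boundary S S' c)"

end

theory Submission
  imports Defs
begin


lemma wl_word:
  assumes "fin_gen S"
  shows "\<exists>ws. length ws = word_len S x \<and> set ws \<subseteq> S \<union> uminus ` S \<and> sum_list ws = x"
proof -
  from assms obtain ws where "set ws \<subseteq> S \<union> uminus ` S \<and> sum_list ws = x"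
    unfolding fin_gen_def by blast
  then have "\<exists>n ws. length ws = n \<and> set ws \<subseteq> S \<union> uminus ` S \<and> sum_list ws = x" by blast
  then show ?thesis unfolding word_len_def by (rule LeastI_ex)
qed

lemma wl_le:
  assumes "set ws \<subseteq> S \<union> uminus ` S" "sum_list ws = x"
  shows "word_len S x \<le> length ws"
  unfolding word_len_def using assms by (intro Least_le) blast

lemma sum_list_rev_neg: "sum_list (rev (map uminus ws)) = - sum_list (ws :: 'a::group_add list)"
  by (induction ws) (auto simp: minus_add)

lemma wl_add:
  assumes "fin_gen S"
  shows "word_len S (a + b) \<le> word_len S a + word_len S b"
proof -
  obtain wa where a: "length wa = word_len S a" "set wa \<subseteq> S \<union> uminus ` S" "sum_list wa = a"
    using wl_word[OF assms] by blast
  obtain wb where b: "length wb = word_len S b" "set wb \<subseteq> S \<union> uminus ` S" "sum_list wb = b"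
    using wl_word[OF assms] by blast
  have "word_len S (a + b) \<le> length (wa @ wb)"
    by (rule wl_le) (use a b in auto)
  then show ?thesis using a b by simp
qed

lemma wl_neg_le:
  assumes "fin_gen S"
  shows "word_len S (- a) \<le> word_len S a"
proof -
  obtain wa where a: "length wa = word_len S a" "set wa \<subseteq> S \<union> uminus ` S" "sum_list wa = a"
    using wl_word[OF assms] by blast
  have "word_len S (- a) \<le> length (rev (map uminus wa))"
    by (rule wl_le) (use a sum_list_rev_neg[of wa] in auto)
  then show ?thesis using a by simp
qed

lemma wl_neg: "fin_gen S \<Longrightarrow> word_len S (- a) = word_len S a"
  using wl_neg_le[of S a] wl_neg_le[of S "-a"] by simp

lemma wd_sym: "fin_gen S \<Longrightarrow> wdist S x y = wdist S y x"
  unfolding wdist_def by (metis wl_neg minus_add minus_minus)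

lemma wd_tri: "fin_gen S \<Longrightarrow> wdist S x z \<le> wdist S x y + wdist S y z"
  unfolding wdist_def using wl_add[of S "-x+y" "-y+z"] by (simp add: add.assoc)

lemma wd_self: "wdist S x x = 0"
  unfolding wdist_def using wl_le[of "[]" S 0] by simp

lemma ball_finite:
  assumes "fin_gen S"
  shows "finite {y. wdist S 0 y \<le> n}"
proof -
  have fS: "finite (S \<union> uminus ` S)" using assms unfolding fin_gen_def by auto
  have "{y. wdist S 0 y \<le> n} \<subseteq> sum_list ` {ws. set ws \<subseteq> S \<union> uminus ` S \<and> length ws \<le> n}"
  proof
    fix y assume "y \<in> {y. wdist S 0 y \<le> n}"
    then have "word_len S y \<le> n" unfolding wdist_def by simp
    with wl_word[OF assms, of y] show "y \<in> sum_list ` {ws. set ws \<subseteq> S \<union> uminus ` S \<and> length ws \<le> n}"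
      by force
  qed
  moreover have "finite {ws. set ws \<subseteq> S \<union> uminus ` S \<and> length ws \<le> n}"
    using finite_lists_length_le[OF fS] by simp
  ultimately show ?thesis using finite_surj by blast
qed



lemma compact_PiE_UNIV:
  assumes "\<And>i. compact (K i :: 'b::topological_space set)"
  shows "compact (Pi\<^sub>E UNIV K)"
proof -
  have "compactin (product_topology (\<lambda>i. euclidean) UNIV) (Pi\<^sub>E UNIV K)"
    using assms by (simp add: compactin_PiE)
  then show ?thesis by (simp add: euclidean_product_topology)
qed

lemma compact_bool_at: "compact {b :: 'c \<Rightarrow> bool. b y0}"
proof -
  have "{b :: 'c \<Rightarrow> bool. b y0} = Pi\<^sub>E UNIV (\<lambda>y. if y = y0 then {True} else UNIV)"
    by (auto simp: PiE_def Pi_def extensional_def)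
  moreover have "compact (Pi\<^sub>E UNIV (\<lambda>y. if y = y0 then {True} else (UNIV::bool set)))"
    by (rule compact_PiE_UNIV) (auto intro: finite_imp_compact)
  ultimately show ?thesis by simp
qed

lemma tendsto_fun_pointwise:
  fixes f :: "'x \<Rightarrow> 'i \<Rightarrow> 'b::topological_space"
  assumes "\<And>i. ((\<lambda>x. f x i) \<longlongrightarrow> l i) F"
  shows "(f \<longlongrightarrow> l) F"
proof -
  have "limitin (product_topology (\<lambda>i. euclidean) UNIV) f l F"
    using assms by (simp add: limitin_componentwise)
  then show ?thesis by (simp add: euclidean_product_topology)
qed

lemma test_fun:
  fixes b0 :: "'c \<Rightarrow> bool" and t0 :: "'c \<Rightarrow> real" and B :: "'c set"
  assumes "finite B" "y0 \<in> B" "b0 y0" "compact H" "e > 0"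
  defines "\<phi> \<equiv> \<lambda>q::('c \<Rightarrow> bool) \<times> ('c \<Rightarrow> real).
     (\<Prod>y\<in>B. if fst q y = b0 y then 1 else 0) * (\<Prod>y\<in>B. max 0 (1 - \<bar>snd q y - t0 y\<bar> / e))"
  shows "\<phi> \<in> Cc {(b, \<theta>). (\<exists>y. b y) \<and> \<theta> \<in> H}" "\<phi> (b0, t0) = 1" "\<And>q. \<phi> q \<ge> 0"
    "\<And>q. \<phi> q \<noteq> 0 \<Longrightarrow> (\<forall>y\<in>B. fst q y = b0 y \<and> \<bar>snd q y - t0 y\<bar> < e)"
proof -
  show "\<phi> (b0, t0) = 1" unfolding \<phi>_def by simp
  show "\<And>q. \<phi> q \<ge> 0" unfolding \<phi>_def by (intro mult_nonneg_nonneg prod_nonneg) auto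
  show "\<phi> q \<noteq> 0 \<Longrightarrow> (\<forall>y\<in>B. fst q y = b0 y \<and> \<bar>snd q y - t0 y\<bar> < e)" for q
  proof (intro ballI conjI)
    fix y assume nz: "\<phi> q \<noteq> 0" and y: "y \<in> B"
    then have a: "(\<Prod>y\<in>B. if fst q y = b0 y then 1 else (0::real)) \<noteq> 0"
      and b: "(\<Prod>y\<in>B. max 0 (1 - \<bar>snd q y - t0 y\<bar> / e)) \<noteq> 0" unfolding \<phi>_def by auto
    from a y assms(1) show "fst q y = b0 y" by (auto simp: prod_zero_iff split: if_splits)
    from b y assms(1) have "max 0 (1 - \<bar>snd q y - t0 y\<bar> / e) \<noteq> 0" by (auto simp: prod_zero_iff)
    moreover have "max 0 z \<noteq> 0 \<Longrightarrow> 0 < z" for z :: real by (auto simp: max_def split: if_splits)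
    ultimately have "\<bar>snd q y - t0 y\<bar> / e < 1" by fastforce
    then show "\<bar>snd q y - t0 y\<bar> < e" using assms(5) by (simp add: divide_less_eq)
  qed
  have c1: "continuous_on UNIV (\<lambda>q::('c \<Rightarrow> bool) \<times> ('c \<Rightarrow> real). fst q y)" for y
    by (rule continuous_on_product_then_coordinatewise) (intro continuous_intros)
  have c2: "continuous_on UNIV (\<lambda>q::('c \<Rightarrow> bool) \<times> ('c \<Rightarrow> real). snd q y)" for y
    by (rule continuous_on_product_then_coordinatewise) (intro continuous_intros)
  have c3: "continuous_on UNIV (\<lambda>q::('c \<Rightarrow> bool) \<times> ('c \<Rightarrow> real). if fst q y = b0 y then 1 else (0::real))" for y
  proof -
    have "continuous_on UNIV ((\<lambda>v. if v = b0 y then 1 else (0::real)) \<circ> (\<lambda>q::('c \<Rightarrow> bool) \<times> ('c \<Rightarrow> real). fst q y))"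
      by (rule continuous_on_compose[OF c1]) simp
    then show ?thesis by (simp add: o_def)
  qed
  have cont: "continuous_on UNIV \<phi>" unfolding \<phi>_def
    using assms(5) by (intro continuous_intros c3 c2) auto
  let ?K = "{b :: 'c \<Rightarrow> bool. b y0} \<times> H"
  have "compact ?K" by (intro compact_Times compact_bool_at assms)
  moreover have "?K \<subseteq> {(b, \<theta>). (\<exists>y. b y) \<and> \<theta> \<in> H}" by auto
  moreover have "\<forall>p\<in>{(b, \<theta>). (\<exists>y. b y) \<and> \<theta> \<in> H} - ?K. \<phi> p = 0"
  proof
    fix p assume "p \<in> {(b, \<theta>). (\<exists>y. b y) \<and> \<theta> \<in> H} - ?K"
    then have "\<not> fst p y0" by auto
    then have "(\<Prod>y\<in>B. if fst p y = b0 y then 1 else (0::real)) = 0"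
      using assms(1-3) by (auto simp: prod_zero_iff)
    then show "\<phi> p = 0" unfolding \<phi>_def by simp
  qed
  ultimately show "\<phi> \<in> Cc {(b, \<theta>). (\<exists>y. b y) \<and> \<theta> \<in> H}"
    unfolding Cc_def using continuous_on_subset[OF cont] by blast
qed



lemma closed_PiE_UNIV:
  assumes "\<And>i. closed (K i :: 'b::topological_space set)"
  shows "closed (Pi\<^sub>E UNIV K)"
proof -
  have "closedin (product_topology (\<lambda>i. euclidean) UNIV) (Pi\<^sub>E UNIV K)"
    using assms by (simp add: closedin_product_topology)
  then show ?thesis by (simp add: euclidean_product_topology)
qed

lemma rho_tri:
  assumes "fin_gen S" "fin_gen S'" "c > 0"
  shows "rho S S' c x z \<le> rho S S' c x y + rho S S' c y z"
proof -
  have 1: "real (wdist S (fst x) (fst z)) \<le> real (wdist S (fst x) (fst y)) + real (wdist S (fst y) (fst z))"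
    using wd_tri[OF assms(1)] by (simp add: of_nat_add[symmetric] del: of_nat_add)
  have "real (wdist S' (snd x) (snd z)) \<le> real (wdist S' (snd x) (snd y)) + real (wdist S' (snd y) (snd z))"
    using wd_tri[OF assms(2)] by (simp add: of_nat_add[symmetric] del: of_nat_add)
  then have 2: "real (wdist S' (snd x) (snd z)) / c \<le> real (wdist S' (snd x) (snd y)) / c + real (wdist S' (snd y) (snd z)) / c"
    using assms(3) by (simp add: add_divide_distrib[symmetric] divide_right_mono)
  show ?thesis unfolding rho_def using 1 2 by linarith
qed

lemma rho_sym:
  assumes "fin_gen S" "fin_gen S'"
  shows "rho S S' c x y = rho S S' c y x"
  unfolding rho_def using wd_sym[OF assms(1)] wd_sym[OF assms(2)] by metis

lemma horo_closure_compact: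
  assumes "fin_gen S" "fin_gen S'" "c > 0"
  shows "compact (horo_closure S S' c)"
proof -
  define P where "P = Pi\<^sub>E UNIV (\<lambda>y. {- rho S S' c 0 y .. rho S S' c 0 y})"
  have cP: "compact P" unfolding P_def by (rule compact_PiE_UNIV) simp
  have "range (horo S S' c) \<subseteq> P"
  proof
    fix h assume "h \<in> range (horo S S' c)"
    then obtain x where h: "h = horo S S' c x" by blast
    have hb: "\<bar>h y\<bar> \<le> rho S S' c 0 y" for y
    proof -
      have "rho S S' c x y \<le> rho S S' c x 0 + rho S S' c 0 y" by (rule rho_tri[OF assms])
      moreover have "rho S S' c x 0 \<le> rho S S' c x y + rho S S' c y 0" by (rule rho_tri[OF assms])
      moreover have "rho S S' c y 0 = rho S S' c 0 y" by (rule rho_sym[OF assms(1,2)])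
      ultimately show ?thesis unfolding h horo_def by simp
    qed
    have "h y \<in> {- rho S S' c 0 y .. rho S S' c 0 y}" for y
      using hb[of y] unfolding atLeastAtMost_iff by (metis abs_le_iff minus_le_iff)
    then show "h \<in> P" unfolding P_def PiE_UNIV_domain Pi_def by blast
  qed
  then have sub: "closure (range (horo S S' c)) \<subseteq> P"
    unfolding P_def by (rule closure_minimal[OF _ closed_PiE_UNIV]) simp_all
  have "compact (P \<inter> closure (range (horo S S' c)))"
    by (rule compact_Int_closed[OF cP closed_closure])
  moreover have "P \<inter> closure (range (horo S S' c)) = horo_closure S S' c"
    using sub unfolding horo_closure_def by blast
  ultimately show ?thesis by simp
qed



lemma mint_pos_ex: "mint mm \<phi> \<noteq> 0 \<Longrightarrow> \<exists>q. mm q \<noteq> 0 \<and> \<phi> q \<noteq> 0"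
  unfolding mint_def by (metis (mono_tags, lifting) Collect_empty_eq sum.empty)

theorem lemma3p5:
  fixes S :: "'a::group_add set" and S' :: "'b::group_add set"
    and c :: real and f :: "nat \<Rightarrow> nat" and r :: "nat \<Rightarrow> nat"
    and Cs :: "nat \<Rightarrow> ('a, 'b) cpt \<Rightarrow> nat"
  assumes "fin_gen S" and "fin_gen S'"
    and "growth S > 1" and "growth S' > 1"
    and "c = ln (growth S) / ln (growth S')"
    and "mono f" and "f 0 = 0" and "strict_mono r"
    and "\<exists>lo hi. 0 < lo \<and> (\<forall>n. lo \<le> real (ball_vol S' (f (r n))) / real (ball_vol S (r n))
                              \<and> real (ball_vol S' (f (r n))) / real (ball_vol S (r n)) \<le> hi)"
    and "\<forall>m. \<exists>N. \<forall>n\<ge>N. \<bar>real (f (n + m)) - real (f n) - c * real m\<bar> \<le> 1"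
    and "\<forall>n. discrete_set (cspace S S' c) (Cs n)"
    and "\<forall>n p. Cs n p \<noteq> 0 \<longrightarrow> (\<exists>x. p = pdiamond S S' c f r n x)"
    and "\<forall>T::real. (\<lambda>n. real (\<Sum>p\<in>A_set S S' c f r n T. Cs n p)) \<longlonglongrightarrow> 0"
  shows "\<forall>\<sigma> m. strict_mono \<sigma> \<and> discrete_set (cspace S S' c) m
            \<and> vague_conv (cspace S S' c) (Cs \<circ> \<sigma>) m
          \<longrightarrow> (\<forall>p. m p \<noteq> 0 \<longrightarrow> typeII_horoball S S' c f r p)"
proof (intro allI impI)
  fix \<sigma> m p
  assume hyp: "strict_mono \<sigma> \<and> discrete_set (cspace S S' c) m
            \<and> vague_conv (cspace S S' c) (Cs \<circ> \<sigma>) m" and mp: "m p \<noteq> 0"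
  from hyp have \<sigma>: "strict_mono \<sigma>" and dm: "discrete_set (cspace S S' c) m"
    and vc: "vague_conv (cspace S S' c) (Cs \<circ> \<sigma>) m" by auto
  note fS = assms(1) and fS' = assms(2)
  define H where "H = horo_closure S S' c"
  have X: "cspace S S' c = {(b, \<theta>). (\<exists>y. b y) \<and> \<theta> \<in> H}"
    unfolding cspace_def H_def by simp
  have pX: "p \<in> cspace S S' c" using dm mp unfolding discrete_set_def by blast
  obtain b0 t0 where p: "p = (b0, t0)" by (cases p)
  obtain y0 where by0: "b0 y0" using pX p unfolding cspace_def by auto
  have cpos: "c > 0"
  proof -
    have "ln (growth S) > 0" "ln (growth S') > 0" using assms(3,4) by simp_all
    then show ?thesis using assms(5) by simp
  qed
  have cH: "compact H" unfolding H_def by (rule horo_closure_compact[OF fS fS' cpos])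
  define B where "B = (\<lambda>k::nat. insert y0 ({y. wdist S 0 y \<le> k} \<times> {y'. wdist S' 0 y' \<le> k}))"
  have finB: "finite (B k)" for k
    unfolding B_def using ball_finite[OF fS] ball_finite[OF fS'] by simp
  have y0B: "y0 \<in> B k" for k unfolding B_def by simp
  define e where "e = (\<lambda>k::nat. inverse (real (Suc k)))"
  have epos: "e k > 0" for k unfolding e_def by simp
  define \<phi> where "\<phi> = (\<lambda>k::nat. \<lambda>q::('a, 'b) cpt.
     (\<Prod>y\<in>B k. if fst q y = b0 y then 1 else 0) * (\<Prod>y\<in>B k. max 0 (1 - \<bar>snd q y - t0 y\<bar> / e k)))"
  have tf1: "\<phi> k \<in> Cc (cspace S S' c)" for k
    unfolding X \<phi>_def by (rule test_fun(1)[where B="B k" and ?y0.0=y0 and ?b0.0=b0 and H=H and e="e k" and ?t0.0=t0, OF finB[of k] y0B[of k] by0 cH epos[of k]])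
  have tf2: "\<phi> k (b0, t0) = 1" for k
    unfolding \<phi>_def by (rule test_fun(2)[where B="B k" and ?y0.0=y0 and ?b0.0=b0 and H=H and e="e k" and ?t0.0=t0, OF finB[of k] y0B[of k] by0 cH epos[of k]])
  have tf3: "\<phi> k q \<ge> 0" for k q
    unfolding \<phi>_def by (rule test_fun(3)[where B="B k" and ?y0.0=y0 and ?b0.0=b0 and H=H and e="e k" and ?t0.0=t0, OF finB[of k] y0B[of k] by0 cH epos[of k]])
  have tf4: "\<phi> k q \<noteq> 0 \<Longrightarrow> (\<forall>y\<in>B k. fst q y = b0 y \<and> \<bar>snd q y - t0 y\<bar> < e k)" for k q
    unfolding \<phi>_def by (rule test_fun(4)[where B="B k" and ?y0.0=y0 and ?b0.0=b0 and H=H and e="e k" and ?t0.0=t0, OF finB[of k] y0B[of k] by0 cH epos[of k]])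
  have step1: "\<exists>N. \<forall>n\<ge>N. \<exists>q. Cs (\<sigma> n) q \<noteq> 0 \<and> \<phi> k q \<noteq> 0" for k
  proof -
    have lim: "(\<lambda>n. mint (Cs (\<sigma> n)) (\<phi> k)) \<longlonglongrightarrow> mint m (\<phi> k)"
      using vc tf1[of k] unfolding vague_conv_def by auto
    have fin: "finite {q. m q \<noteq> 0 \<and> \<phi> k q \<noteq> 0}"
    proof (rule finite_subset)
      show "{q. m q \<noteq> 0 \<and> \<phi> k q \<noteq> 0} \<subseteq> {q. m q \<noteq> 0 \<and> fst q y0}"
        using tf4[of k] y0B[of k] by0 by auto
      show "finite {q. m q \<noteq> 0 \<and> fst q y0}" using dm unfolding discrete_set_def by blast
    qed
    have "real (m p) * \<phi> k p \<le> mint m (\<phi> k)"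
      unfolding mint_def
      by (rule member_le_sum[OF _ _ fin, where f = "\<lambda>q. real (m q) * \<phi> k q"])
         (use mp tf2 tf3 p in auto)
    moreover have "real (m p) * \<phi> k p > 0" using mp tf2[of k] p by simp
    ultimately have "mint m (\<phi> k) > 0" by linarith
    from order_tendstoD(1)[OF lim this] obtain N where N: "\<forall>n\<ge>N. mint (Cs (\<sigma> n)) (\<phi> k) > 0"
      unfolding eventually_sequentially by blast
    show ?thesis
    proof (rule exI[of _ N], intro allI impI)
      fix n assume "N \<le> n"
      then have "mint (Cs (\<sigma> n)) (\<phi> k) \<noteq> 0" using N by force
      then show "\<exists>q. Cs (\<sigma> n) q \<noteq> 0 \<and> \<phi> k q \<noteq> 0" by (rule mint_pos_ex)
    qed
  qed
  have step2: "\<exists>N. \<forall>n\<ge>N. \<forall>q\<in>A_set S S' c f r (\<sigma> n) T. Cs (\<sigma> n) q = 0" for T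
  proof -
    have finA: "finite (A_set S S' c f r n T)" for n
    proof -
      define M where "M = r n + f (r n) + nat \<lceil>\<bar>T\<bar>\<rceil>"
      have "real (r n) + T \<le> real M" "T \<le> real M" "real (f (r n)) + T \<le> real M"
        using abs_ge_self[of T] real_nat_ceiling_ge[of "\<bar>T\<bar>"] unfolding M_def of_nat_add by linarith+
      then have "{x. (real (wdist S 0 (fst x)) < real (r n) + T \<and> real (wdist S' 0 (snd x)) < T) \<or>
         (real (wdist S' 0 (snd x)) < real (f (r n)) + T \<and> real (wdist S 0 (fst x)) < T)}
         \<subseteq> {y. wdist S 0 y \<le> M} \<times> {y'. wdist S' 0 y' \<le> M}"
        by auto
      moreover have "finite ({y. wdist S 0 y \<le> M} \<times> {y'. wdist S' 0 y' \<le> M})"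
        using ball_finite[OF fS] ball_finite[OF fS'] by simp
      ultimately show ?thesis unfolding A_set_def by (meson finite_subset finite_imageI)
    qed
    from order_tendstoD(2)[OF spec[OF assms(13), of T], of 1]
    obtain N where N: "\<forall>n\<ge>N. real (\<Sum>p\<in>A_set S S' c f r n T. Cs n p) < 1"
      unfolding eventually_sequentially by auto
    show ?thesis
    proof (rule exI[of _ N], intro allI impI ballI)
      fix n q assume n: "N \<le> n" and q: "q \<in> A_set S S' c f r (\<sigma> n) T"
      have "N \<le> \<sigma> n" using n seq_suble[OF \<sigma>, of n] by linarith
      then have "real (\<Sum>p\<in>A_set S S' c f r (\<sigma> n) T. Cs (\<sigma> n) p) < 1" using N by blast
      then have "(\<Sum>p\<in>A_set S S' c f r (\<sigma> n) T. Cs (\<sigma> n) p) = 0" by linarith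
      then show "Cs (\<sigma> n) q = 0" using finA q by simp
    qed
  qed
  define R0 where "R0 = real (wdist S 0 (fst y0)) + real (wdist S' 0 (snd y0)) + 1"
  define T where "T = (\<lambda>k::nat. real k + R0)"
  have "\<forall>k. \<exists>N. \<forall>n\<ge>N. \<exists>q. Cs (\<sigma> n) q \<noteq> 0 \<and> \<phi> k q \<noteq> 0" using step1 by blast
  from choice[OF this] obtain N1 where N1': "\<forall>k. \<forall>n\<ge>N1 k. \<exists>q. Cs (\<sigma> n) q \<noteq> 0 \<and> \<phi> k q \<noteq> 0"
    by blast
  then have N1: "\<And>k n. n \<ge> N1 k \<Longrightarrow> \<exists>q. Cs (\<sigma> n) q \<noteq> 0 \<and> \<phi> k q \<noteq> 0" by blast
  have "\<forall>k. \<exists>N. \<forall>n\<ge>N. \<forall>q\<in>A_set S S' c f r (\<sigma> n) (T k). Cs (\<sigma> n) q = 0" using step2 by blast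
  from choice[OF this] obtain N2 where N2': "\<forall>k. \<forall>n\<ge>N2 k. \<forall>q\<in>A_set S S' c f r (\<sigma> n) (T k). Cs (\<sigma> n) q = 0"
    by blast
  then have N2: "\<And>k n q. n \<ge> N2 k \<Longrightarrow> q \<in> A_set S S' c f r (\<sigma> n) (T k) \<Longrightarrow> Cs (\<sigma> n) q = 0"
    by blast
  define M where "M = (\<lambda>k. max (N1 k) (N2 k) + k)"
  define nk where "nk = (\<lambda>k. \<sigma> (M k))"
  have "\<forall>k. \<exists>q. Cs (nk k) q \<noteq> 0 \<and> \<phi> k q \<noteq> 0"
  proof
    fix k have "M k \<ge> N1 k" unfolding M_def by simp
    then show "\<exists>q. Cs (nk k) q \<noteq> 0 \<and> \<phi> k q \<noteq> 0" using N1 unfolding nk_def by blast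
  qed
  from choice[OF this] obtain Q where Q: "\<And>k. Cs (nk k) (Q k) \<noteq> 0 \<and> \<phi> k (Q k) \<noteq> 0"
    by blast
  have "\<forall>k. \<exists>x. Q k = pdiamond S S' c f r (nk k) x" using Q assms(12) by blast
  from choice[OF this] obtain xk where xk: "\<And>k. Q k = pdiamond S S' c f r (nk k) (xk k)"
    by blast
  have notA: "Q k \<notin> A_set S S' c f r (nk k) (T k)" for k
  proof
    assume "Q k \<in> A_set S S' c f r (nk k) (T k)"
    moreover have "M k \<ge> N2 k" unfolding M_def by simp
    ultimately have "Cs (nk k) (Q k) = 0" using N2 unfolding nk_def by blast
    then show False using Q[of k] by simp
  qed
  have QB: "\<forall>y\<in>B k. fst (Q k) y = b0 y \<and> \<bar>snd (Q k) y - t0 y\<bar> < e k" for k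
    using tf4[of k "Q k"] Q[of k] by blast
  have far: "real (wdist S 0 (fst (xk k))) \<ge> T k \<and> real (wdist S' 0 (snd (xk k))) \<ge> T k" for k
  proof -
    let ?n = "nk k" and ?x = "xk k"
    have "fst (Q k) y0" using QB[of k] y0B[of k] by0 by auto
    then have "y0 \<in> diamond S S' f r ?n ?x" using xk[of k] unfolding pdiamond_def by simp
    then obtain t where t: "t \<le> r ?n" "wdist S (fst ?x) (fst y0) = r ?n - t"
       "wdist S' (snd ?x) (snd y0) \<le> f t"
      unfolding diamond_def by auto
    have ft: "f t \<le> f (r ?n)" using assms(6) t(1) by (simp add: monoD)
    have d1: "wdist S 0 (fst ?x) \<le> wdist S 0 (fst y0) + r ?n"
      using wd_tri[OF fS, of 0 "fst ?x" "fst y0"] wd_sym[OF fS, of "fst y0" "fst ?x"] t(2) by linarith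
    have d2: "wdist S' 0 (snd ?x) \<le> wdist S' 0 (snd y0) + f (r ?n)"
      using wd_tri[OF fS', of 0 "snd ?x" "snd y0"] wd_sym[OF fS', of "snd y0" "snd ?x"] t(3) ft by linarith
    have r1: "real (wdist S 0 (fst ?x)) < real (r ?n) + T k"
      using d1 unfolding T_def R0_def by linarith
    have r2: "real (wdist S' 0 (snd ?x)) < real (f (r ?n)) + T k"
      using d2 unfolding T_def R0_def by linarith
    have "?x \<notin> {x. (real (wdist S 0 (fst x)) < real (r ?n) + T k \<and> real (wdist S' 0 (snd x)) < T k) \<or>
         (real (wdist S' 0 (snd x)) < real (f (r ?n)) + T k \<and> real (wdist S 0 (fst x)) < T k)}"
    proof
      assume "?x \<in> {x. (real (wdist S 0 (fst x)) < real (r ?n) + T k \<and> real (wdist S' 0 (snd x)) < T k) \<or>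
         (real (wdist S' 0 (snd x)) < real (f (r ?n)) + T k \<and> real (wdist S 0 (fst x)) < T k)}"
      then have "pdiamond S S' c f r ?n ?x \<in> A_set S S' c f r ?n (T k)"
        unfolding A_set_def by (rule imageI)
      then show False using notA[of k] xk[of k] by simp
    qed
    then have n1: "\<not> (real (wdist S 0 (fst ?x)) < real (r ?n) + T k \<and> real (wdist S' 0 (snd ?x)) < T k)"
      and n2: "\<not> (real (wdist S' 0 (snd ?x)) < real (f (r ?n)) + T k \<and> real (wdist S 0 (fst ?x)) < T k)"
      by simp_all
    from n1 r1 have a1: "T k \<le> real (wdist S' 0 (snd ?x))" by (simp add: not_less)
    from n2 r2 have a2: "T k \<le> real (wdist S 0 (fst ?x))" by (simp add: not_less)
    show ?thesis using a1 a2 by simp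
  qed
  have Tk: "real k \<le> T k" for k unfolding T_def R0_def by simp
  show "typeII_horoball S S' c f r p"
    unfolding typeII_horoball_def
  proof (rule disjI1, rule conjI[OF pX], rule exI[of _ nk], rule exI[of _ xk], intro conjI)
    show "filterlim nk at_top sequentially"
    proof (rule filterlim_at_top_mono[OF filterlim_ident])
      have "k \<le> nk k" for k
        using seq_suble[OF \<sigma>, of "M k"] unfolding nk_def M_def by linarith
      then show "\<forall>\<^sub>F k in sequentially. k \<le> nk k" by simp
    qed
    show "filterlim (\<lambda>k. real (wdist S (fst (xk k)) 0)) at_top sequentially"
    proof (rule filterlim_at_top_mono[OF filterlim_real_sequentially])
      have "real k \<le> real (wdist S (fst (xk k)) 0)" for k
        using far[of k] Tk[of k] wd_sym[OF fS, of "fst (xk k)" 0] by linarith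
      then show "\<forall>\<^sub>F k in sequentially. real k \<le> real (wdist S (fst (xk k)) 0)"
        by (intro always_eventually allI)
    qed
    show "filterlim (\<lambda>k. real (wdist S' (snd (xk k)) 0)) at_top sequentially"
    proof (rule filterlim_at_top_mono[OF filterlim_real_sequentially])
      have "real k \<le> real (wdist S' (snd (xk k)) 0)" for k
        using far[of k] Tk[of k] wd_sym[OF fS', of "snd (xk k)" 0] by linarith
      then show "\<forall>\<^sub>F k in sequentially. real k \<le> real (wdist S' (snd (xk k)) 0)"
        by (intro always_eventually allI)
    qed
    have inB: "\<forall>\<^sub>F k in sequentially. y \<in> B k" for y
    proof -
      have "\<forall>k\<ge>max (wdist S 0 (fst y)) (wdist S' 0 (snd y)). y \<in> B k"
        unfolding B_def by (cases y) auto
      then show ?thesis unfolding eventually_sequentially by blast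
    qed
    have l1: "(\<lambda>k. fst (Q k)) \<longlonglongrightarrow> b0"
    proof (rule tendsto_fun_pointwise)
      fix y
      show "(\<lambda>k. fst (Q k) y) \<longlonglongrightarrow> b0 y"
        by (rule tendsto_eventually, rule eventually_mono[OF inB[of y]]) (use QB in blast)
    qed
    have l2: "(\<lambda>k. snd (Q k)) \<longlonglongrightarrow> t0"
    proof (rule tendsto_fun_pointwise)
      fix y
      have "(\<lambda>k. snd (Q k) y - t0 y) \<longlonglongrightarrow> 0"
      proof (rule Lim_null_comparison)
        show "\<forall>\<^sub>F k in sequentially. norm (snd (Q k) y - t0 y) \<le> e k"
          by (rule eventually_mono[OF inB[of y]]) (use QB in \<open>fastforce simp: less_imp_le\<close>)
        show "e \<longlonglongrightarrow> 0" unfolding e_def by (rule LIMSEQ_inverse_real_of_nat)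
      qed
      then show "(\<lambda>k. snd (Q k) y) \<longlonglongrightarrow> t0 y" by (rule LIM_zero_cancel)
    qed
    have "(\<lambda>k. (fst (Q k), snd (Q k))) \<longlonglongrightarrow> (b0, t0)" by (rule tendsto_Pair[OF l1 l2])
    moreover have "(\<lambda>k. pdiamond S S' c f r (nk k) (xk k)) = Q"
      by (rule ext) (simp add: xk)
    ultimately show "(\<lambda>k. pdiamond S S' c f r (nk k) (xk k)) \<longlonglongrightarrow> p"
      using p by simp
  qed
qed


end
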